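(* In the setting described in the context, assume A1$'$, A2 and A3. If there exists $k^\star\in\{1,\dots,K\}$ with $\inf_{\mathbf w\in\mathcal W^*}w_{k^\star}>\frac12$, then $\liminf_{n\to\infty}\Pr\big(Y\in\mathcal C_{\mathrm{comb}}(\mathbf X;\mathcal D_n)\big)\ge1-\alpha$.
   Context: Setting: fix $K\ge2$ and $\alpha\in(0,1)$. For each sample size $n$, on a common probability space there are a random data set $\mathcal D_n$ and a random test pair $(\mathbf X,Y)$ with $\mathbf X\in\mathcal X\subseteq\mathbb R^p$, $Y\in\mathbb R$. For each $k\in\{1,\dots,K\}$ there is a random prediction set $\mathcal C_k(\mathbf X;\mathcal D_n)\subseteq\mathbb R$, determined by $\mathcal D_n$ and $\mathbf X$, such that the events $\{Y\in\mathcal C_k(\mathbf X;\mathcal D_n)\}$ are measurable. Let $\Delta^{K-1}=\{\mathbf w\in[0,1]^K:w_k\ge0,\sum_k w_k=1\}$ and let $\widehat{\mathbf w}_n=(\widehat w_{n,1},\dots,\widehat w_{n,K})$ be a $\sigma(\mathcal D_n)$-measurable random vector in $\Delta^{K-1}$. Let $\mathcal W^*\subseteq\Delta^{K-1}$ be a nonempty closed convex set; $\|\cdot\|$ is the Euclidean norm. A1$'$: $\sup_{k\in\{1,\dots,K\}}\big|\Pr(Y\notin\mathcal C_k(\mathbf X;\mathcal D_n)\mid\mathcal D_n)-\alpha\big|\to0$ in probability as $n\to\infty$. A2: $\inf_{\mathbf w\in\mathcal W^*}\|\widehat{\mathbf w}_n-\mathbf w\|\to0$ in probability as $n\to\infty$.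 A3: $\mathcal C_{\mathrm{comb}}(\mathbf X;\mathcal D_n):=\{y\in\mathbb R:\sum_{k=1}^K\widehat w_{n,k}\mathbf 1\{y\in\mathcal C_k(\mathbf X;\mathcal D_n)\}>1/2\}$. *)

theory Defs
  imports "HOL-Probability.Probability"
begin

definition cond_prob_given :: "'a measure \<Rightarrow> ('a \<Rightarrow> 'd) \<Rightarrow> 'd measure \<Rightarrow> 'a set \<Rightarrow> 'a \<Rightarrow> real" where
  "cond_prob_given M D S A = real_cond_exp M (vimage_algebra (space M) D S) (indicator A)"

definition conv_in_prob_zero :: "'a measure \<Rightarrow> (nat \<Rightarrow> 'a \<Rightarrow> real) \<Rightarrow> bool" where
  "conv_in_prob_zero M Z \<longleftrightarrow>
     (\<forall>e>0. (\<lambda>n. measure M {\<omega> \<in> space M. \<bar>Z n \<omega>\<bar> > e}) \<longlonglongrightarrow> 0)"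

definition simplex_set :: "(real ^ 'k::finite) set" where
  "simplex_set = {w. (\<forall>k. w $ k \<ge> 0) \<and> (\<Sum>k\<in>UNIV. w $ k) = 1}"

definition comb_set :: "(real ^ 'k::finite) \<Rightarrow> ('k \<Rightarrow> real set) \<Rightarrow> real set" where
  "comb_set w C = {y. (\<Sum>k\<in>UNIV. w $ k * indicator (C k) y) > 1/2}"

end

theory Submission
  imports Defs
begin

lemma vimage_subalg:
  assumes "D \<in> measurable M S"
  shows "subalgebra M (vimage_algebra (space M) D S)"
proof -
  have id: "(\<lambda>x. x) \<in> measurable M (vimage_algebra (space M) D S)"
    by (rule measurable_vimage_algebra2) (use assms in auto)
  show ?thesis unfolding subalgebra_def
  proof (intro conjI subsetI)
    fix A assume A: "A \<in> sets (vimage_algebra (space M) D S)"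
    have "(\<lambda>x. x) -` A \<inter> space M \<in> sets M" using measurable_sets[OF id A] .
    moreover have "A \<subseteq> space M" using sets.sets_into_space[OF A] by simp
    ultimately show "A \<in> sets M" by (simp add: Int_absorb2)
  qed simp
qed

lemma cp_props:
  assumes P: "prob_space M" and Dm: "D \<in> measurable M S" and A: "A \<in> sets M"
  shows "cond_prob_given M D S A \<in> borel_measurable M"
    "AE x in M. 0 \<le> cond_prob_given M D S A x \<and> cond_prob_given M D S A x \<le> 1"
    "integrable M (cond_prob_given M D S A)"
    "integral\<^sup>L M (cond_prob_given M D S A) = measure M A"
proof -
  interpret prob_space M by fact
  interpret finite_measure_subalgebra M "vimage_algebra (space M) D S"
    by unfold_locales (rule vimage_subalg[OF Dm])
  have ii: "integrable M (indicator A :: 'a \<Rightarrow> real)" using A by (simp add: integrable_indicator_iff less_top[symmetric])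
  show "cond_prob_given M D S A \<in> borel_measurable M"
    unfolding cond_prob_given_def by simp
  have "AE x in M. 0 \<le> cond_prob_given M D S A x"
    unfolding cond_prob_given_def by (rule real_cond_exp_ge_c[OF ii]) auto
  moreover have "AE x in M. cond_prob_given M D S A x \<le> 1"
    unfolding cond_prob_given_def by (rule real_cond_exp_le_c[OF ii]) (auto simp: indicator_def)
  ultimately show "AE x in M. 0 \<le> cond_prob_given M D S A x \<and> cond_prob_given M D S A x \<le> 1"
    by eventually_elim auto
  show "integrable M (cond_prob_given M D S A)"
    unfolding cond_prob_given_def using real_cond_exp_int(1)[OF ii] .
  show "integral\<^sup>L M (cond_prob_given M D S A) = measure M A"
    unfolding cond_prob_given_def using real_cond_exp_int(2)[OF ii] A by simp
qed

lemma prob_to_alpha: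
  assumes P: "prob_space M" and Dm: "\<And>n. D n \<in> measurable M (S n)"
    and E: "\<And>n. E n \<in> sets M" and al: "0 \<le> \<alpha>" "\<alpha> \<le> 1"
    and conv: "\<And>e. e > 0 \<Longrightarrow> (\<lambda>n. measure M {\<omega>\<in>space M. e < \<bar>cond_prob_given M (D n) (S n) (E n) \<omega> - \<alpha>\<bar>}) \<longlonglongrightarrow> 0"
  shows "(\<lambda>n. measure M (E n)) \<longlonglongrightarrow> \<alpha>"
  unfolding tendsto_iff
proof (intro allI impI)
  interpret prob_space M by fact
  fix e :: real assume e: "e > 0"
  have "eventually (\<lambda>n. measure M {\<omega>\<in>space M. e/2 < \<bar>cond_prob_given M (D n) (S n) (E n) \<omega> - \<alpha>\<bar>} < e/4) sequentially"
    using order_tendstoD(2)[OF conv[of "e/2"], of "e/4"] e by simp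
  then show "eventually (\<lambda>n. dist (measure M (E n)) \<alpha> < e) sequentially"
  proof eventually_elim
    case (elim n)
    define p where "p = cond_prob_given M (D n) (S n) (E n)"
    define B where "B = {\<omega>\<in>space M. e/2 < \<bar>p \<omega> - \<alpha>\<bar>}"
    note cp = cp_props[OF P Dm[of n] E[of n], folded p_def]
    have pm[measurable]: "p \<in> borel_measurable M" using cp(1) .
    have Bm[measurable]: "B \<in> sets M" unfolding B_def by measurable
    have mB: "measure M B < e/4" using elim unfolding B_def p_def .
    have ig: "integrable M (\<lambda>x. e/2 + 2 * indicator B x :: real)"
      using Bm by (intro Bochner_Integration.integrable_add integrable_mult_right)
        (auto simp: integrable_indicator_iff less_top[symmetric])
    have ig2: "integrable M (\<lambda>x. p x - \<alpha>)" "integrable M (\<lambda>x. \<alpha> - p x)"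
      using cp(3) by auto
    have IG: "(\<integral>x. (e/2 + 2 * indicator B x :: real) \<partial>M) = e/2 + 2 * measure M B"
      using Bm by (subst Bochner_Integration.integral_add) (auto simp: prob_space integrable_indicator_iff less_top[symmetric])
    have AEb: "AE x in M. \<bar>p x - \<alpha>\<bar> \<le> e/2 + 2 * indicator B x"
      using cp(2) AE_space
    proof eventually_elim
      case (elim x)
      show ?case
      proof (cases "x \<in> B")
        case True then show ?thesis using elim al e by auto
      next
        case False
        then show ?thesis using elim e unfolding B_def by (auto simp: indicator_def)
      qed
    qed
    have i1: "(\<integral>x. p x - \<alpha> \<partial>M) \<le> e/2 + 2 * measure M B"
      unfolding IG[symmetric] by (rule integral_mono_AE[OF ig2(1) ig]) (use AEb in auto)
    have i2: "(\<integral>x. \<alpha> - p x \<partial>M) \<le> e/2 + 2 * measure M B"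
      unfolding IG[symmetric] by (rule integral_mono_AE[OF ig2(2) ig]) (use AEb in auto)
    have "(\<integral>x. p x - \<alpha> \<partial>M) = measure M (E n) - \<alpha>"
      using cp(3,4) by (subst Bochner_Integration.integral_diff) (auto simp: prob_space)
    moreover have "(\<integral>x. \<alpha> - p x \<partial>M) = \<alpha> - measure M (E n)"
      using cp(3,4) by (subst Bochner_Integration.integral_diff) (auto simp: prob_space)
    ultimately show ?case using i1 i2 mB by (auto simp: dist_real_def abs_if)
  qed
qed

theorem theorem3:
  fixes M :: "'a measure"
    and S :: "nat \<Rightarrow> 'd measure"
    and D :: "nat \<Rightarrow> 'a \<Rightarrow> 'd"
    and X :: "nat \<Rightarrow> 'a \<Rightarrow> real ^ 'p::finite"
    and Y :: "nat \<Rightarrow> 'a \<Rightarrow> real"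
    and \<X> :: "(real ^ 'p) set"
    and C :: "nat \<Rightarrow> 'k::finite \<Rightarrow> 'd \<Rightarrow> real ^ 'p \<Rightarrow> real set"
    and w :: "nat \<Rightarrow> 'a \<Rightarrow> real ^ 'k"
    and W :: "(real ^ 'k) set"
    and \<alpha> :: real
    and kstar :: 'k
  assumes K2: "CARD('k) \<ge> 2"
    and alpha: "0 < \<alpha>" "\<alpha> < 1"
    and M: "prob_space M"
    and D_meas: "\<And>n. D n \<in> measurable M (S n)"
    and X_meas: "\<And>n. X n \<in> borel_measurable M"
    and X_range: "\<And>n \<omega>. \<omega> \<in> space M \<Longrightarrow> X n \<omega> \<in> \<X>"
    and Y_meas: "\<And>n. Y n \<in> borel_measurable M"
    and C_events: "\<And>n k. {\<omega> \<in> space M. Y n \<omega> \<in> C n k (D n \<omega>) (X n \<omega>)} \<in> sets M"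
    and w_meas: "\<And>n. w n \<in> borel_measurable (vimage_algebra (space M) (D n) (S n))"
    and w_simplex: "\<And>n \<omega>. \<omega> \<in> space M \<Longrightarrow> w n \<omega> \<in> simplex_set"
    and W_ne: "W \<noteq> {}" and W_closed: "closed W" and W_convex: "convex W"
    and W_sub: "W \<subseteq> simplex_set"
    and A1': "conv_in_prob_zero M (\<lambda>n \<omega>. Max (range (\<lambda>k.
                 \<bar>cond_prob_given M (D n) (S n)
                    {\<omega>' \<in> space M. Y n \<omega>' \<notin> C n k (D n \<omega>') (X n \<omega>')} \<omega> - \<alpha>\<bar>)))"
    and A2: "conv_in_prob_zero M (\<lambda>n \<omega>. infdist (w n \<omega>) W)"
    and kstar: "(INF v\<in>W. v $ kstar) > 1/2"
  shows "liminf (\<lambda>n. ereal (measure M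
            {\<omega> \<in> space M. Y n \<omega> \<in> comb_set (w n \<omega>) (\<lambda>k. C n k (D n \<omega>) (X n \<omega>))}))
           \<ge> ereal (1 - \<alpha>)"
proof -
  interpret P: prob_space M by fact
  define Ck where "Ck n k = {\<omega> \<in> space M. Y n \<omega> \<in> C n k (D n \<omega>) (X n \<omega>)}" for n k
  define Ek where "Ek n k = {\<omega> \<in> space M. Y n \<omega> \<notin> C n k (D n \<omega>) (X n \<omega>)}" for n k
  have Ck_m[measurable]: "Ck n k \<in> sets M" for n k unfolding Ck_def by (rule C_events)
  have Ek_eq: "Ek n k = space M - Ck n k" for n k unfolding Ek_def Ck_def by auto
  have Ek_m[measurable]: "Ek n k \<in> sets M" for n k unfolding Ek_eq by measurable
  define cp where "cp n k = cond_prob_given M (D n) (S n) (Ek n k)" for n k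
  have cp_m[measurable]: "cp n k \<in> borel_measurable M" for n k
    unfolding cp_def by (rule cp_props(1)[OF M D_meas Ek_m])
  define Mx where "Mx n \<omega> = Max (range (\<lambda>k. \<bar>cp n k \<omega> - \<alpha>\<bar>))" for n \<omega>
  have Mx_m[measurable]: "Mx n \<in> borel_measurable M" for n
    unfolding Mx_def by (rule borel_measurable_Max) auto
  have A1: "\<And>e. e > 0 \<Longrightarrow> (\<lambda>n. measure M {\<omega>\<in>space M. e < \<bar>Mx n \<omega>\<bar>}) \<longlonglongrightarrow> 0"
    using A1' unfolding conv_in_prob_zero_def Mx_def cp_def Ek_def by blast
  have conv: "(\<lambda>n. measure M {\<omega>\<in>space M. e < \<bar>cond_prob_given M (D n) (S n) (Ek n kstar) \<omega> - \<alpha>\<bar>}) \<longlonglongrightarrow> 0"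
    if e: "e > 0" for e
  proof (rule tendsto_sandwich[OF _ _ tendsto_const A1[OF e]])
    show "\<forall>\<^sub>F n in sequentially. 0 \<le> measure M {\<omega>\<in>space M. e < \<bar>cond_prob_given M (D n) (S n) (Ek n kstar) \<omega> - \<alpha>\<bar>}"
      by simp
    show "\<forall>\<^sub>F n in sequentially. measure M {\<omega>\<in>space M. e < \<bar>cond_prob_given M (D n) (S n) (Ek n kstar) \<omega> - \<alpha>\<bar>}
        \<le> measure M {\<omega>\<in>space M. e < \<bar>Mx n \<omega>\<bar>}"
    proof (intro always_eventually allI P.finite_measure_mono)
      fix n
      show "{\<omega>\<in>space M. e < \<bar>Mx n \<omega>\<bar>} \<in> sets M" by measurable
      show "{\<omega>\<in>space M. e < \<bar>cond_prob_given M (D n) (S n) (Ek n kstar) \<omega> - \<alpha>\<bar>} \<subseteq> {\<omega>\<in>space M. e < \<bar>Mx n \<omega>\<bar>}"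
      proof safe
        fix \<omega> assume "\<omega> \<in> space M" "e < \<bar>cond_prob_given M (D n) (S n) (Ek n kstar) \<omega> - \<alpha>\<bar>"
        moreover have "\<bar>cp n kstar \<omega> - \<alpha>\<bar> \<le> Mx n \<omega>"
          unfolding Mx_def by (rule Max_ge) auto
        ultimately show "e < \<bar>Mx n \<omega>\<bar>" unfolding cp_def by linarith
      qed
    qed
  qed
  have Elim: "(\<lambda>n. measure M (Ek n kstar)) \<longlonglongrightarrow> \<alpha>"
    by (rule prob_to_alpha[OF M D_meas Ek_m]) (use alpha conv in auto)
  define m where "m = (INF v\<in>W. v $ kstar)"
  define \<delta> where "\<delta> = (m - 1/2) / 4"
  have \<delta>: "\<delta> > 0" using kstar unfolding \<delta>_def m_def by simp
  have bdd: "bdd_below ((\<lambda>v. v $ kstar) ` W)"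
    using W_sub unfolding simplex_set_def by (intro bdd_belowI[of _ 0]) auto
  have key: "u $ kstar > (1/2::real)" if u: "infdist u W < 2 * \<delta>" for u :: "real ^ 'k"
  proof -
    have "Inf ((\<lambda>a. dist u a) ` W) < 2 * \<delta>" using u infdist_notempty[OF W_ne] by simp
    then obtain a where a: "a \<in> W" "dist u a < 2 * \<delta>"
      using cInf_lessD[of "(\<lambda>a. dist u a) ` W"] W_ne by auto
    have "\<bar>(u - a) $ kstar\<bar> \<le> norm (u - a)" by (rule component_le_norm_cart)
    then have "\<bar>u $ kstar - a $ kstar\<bar> < 2 * \<delta>" using a(2) by (simp add: dist_norm)
    then have "a $ kstar - u $ kstar < 2 * \<delta>" by (simp add: abs_less_iff)
    moreover have "m \<le> a $ kstar" unfolding m_def by (rule cINF_lower[OF bdd a(1)])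
    moreover have "m > 1/2" using kstar unfolding m_def .
    ultimately show ?thesis unfolding \<delta>_def by argo
  qed
  have wm[measurable]: "w n \<in> borel_measurable M" for n
    by (rule measurable_from_subalg[OF vimage_subalg[OF D_meas] w_meas])
  have wk[measurable]: "(\<lambda>\<omega>. w n \<omega> $ k) \<in> borel_measurable M" for n k
    by (rule measurable_compose[OF wm borel_measurable_nth])
  have idm[measurable]: "(\<lambda>\<omega>. infdist (w n \<omega>) W) \<in> borel_measurable M" for n
    by (rule measurable_compose[OF wm borel_measurable_continuous_onI]) (intro continuous_intros)
  define G where "G n = {\<omega>\<in>space M. \<delta> < \<bar>infdist (w n \<omega>) W\<bar>}" for n
  have G_m[measurable]: "G n \<in> sets M" for n unfolding G_def by measurable
  have Glim: "(\<lambda>n. measure M (G n)) \<longlonglongrightarrow> 0"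
    using A2 \<delta> unfolding conv_in_prob_zero_def G_def by blast
  define Cb where "Cb n = {\<omega> \<in> space M. Y n \<omega> \<in> comb_set (w n \<omega>) (\<lambda>k. C n k (D n \<omega>) (X n \<omega>))}" for n
  have Cb_eq: "Cb n = {\<omega> \<in> space M. 1/2 < (\<Sum>k\<in>UNIV. w n \<omega> $ k * indicator (Ck n k) \<omega>)}" for n
    unfolding Cb_def comb_set_def Ck_def by (auto simp: indicator_def)
  have Cb_m[measurable]: "Cb n \<in> sets M" for n unfolding Cb_eq by measurable
  have sub: "space M - (Ek n kstar \<union> G n) \<subseteq> Cb n" for n
  proof
    fix \<omega> assume om: "\<omega> \<in> space M - (Ek n kstar \<union> G n)"
    then have sp: "\<omega> \<in> space M" and inC: "\<omega> \<in> Ck n kstar" and nG: "\<omega> \<notin> G n"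
      unfolding Ek_eq by auto
    have "infdist (w n \<omega>) W < 2 * \<delta>" using nG sp \<delta> infdist_nonneg[of "w n \<omega>" W] unfolding G_def by auto
    then have big: "w n \<omega> $ kstar > 1/2" by (rule key)
    have nn: "\<And>k. 0 \<le> w n \<omega> $ k" using w_simplex[OF sp] unfolding simplex_set_def by auto
    have "w n \<omega> $ kstar * indicator (Ck n kstar) \<omega> \<le> (\<Sum>k\<in>UNIV. w n \<omega> $ k * indicator (Ck n k) \<omega>)"
      by (rule member_le_sum) (auto intro!: mult_nonneg_nonneg nn)
    then show "\<omega> \<in> Cb n" unfolding Cb_eq using sp inC big by auto
  qed
  have lower: "1 - measure M (Ek n kstar) - measure M (G n) \<le> measure M (Cb n)" for n
  proof -
    have "1 - measure M (Ek n kstar) - measure M (G n) \<le> 1 - measure M (Ek n kstar \<union> G n)"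
      using measure_Un_le[OF Ek_m[of n kstar] G_m[of n]] by simp
    also have "\<dots> = measure M (space M - (Ek n kstar \<union> G n))"
      by (rule P.prob_compl[symmetric]) simp
    also have "\<dots> \<le> measure M (Cb n)" by (rule P.finite_measure_mono[OF sub Cb_m])
    finally show ?thesis .
  qed
  show ?thesis
    unfolding Cb_def[symmetric] le_Liminf_iff
  proof (intro allI impI)
    fix y :: ereal assume y: "y < ereal (1 - \<alpha>)"
    show "\<forall>\<^sub>F n in sequentially. y < ereal (measure M (Cb n))"
    proof (cases y)
      case (real r)
      define \<epsilon> where "\<epsilon> = 1 - \<alpha> - r"
      have \<epsilon>: "\<epsilon> > 0" using y real unfolding \<epsilon>_def by simp
      have "\<forall>\<^sub>F n in sequentially. measure M (Ek n kstar) < \<alpha> + \<epsilon>/2"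
        using order_tendstoD(2)[OF Elim, of "\<alpha> + \<epsilon>/2"] \<epsilon> by simp
      moreover have "\<forall>\<^sub>F n in sequentially. measure M (G n) < \<epsilon>/2"
        using order_tendstoD(2)[OF Glim, of "\<epsilon>/2"] \<epsilon> by simp
      ultimately show ?thesis
      proof eventually_elim
        case (elim n)
        have "r < measure M (Cb n)" using elim lower[of n] unfolding \<epsilon>_def by argo
        then show ?case using real by simp
      qed
    next
      case PInf then show ?thesis using y by simp
    next
      case MInf then show ?thesis by simp
    qed
  qed
qed

end
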